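(* In the Simon urn described in the context, with fixed trigger probability $p\in(0,1)$, for all integers $n\ge c\ge1$, $$\mathbb E[K_{n,c}]=\frac{\Gamma(n-p+1)}{\Gamma(n)}\left(\frac{p^{c-1}}{(1-p)^c}\sum_{i=c+1}^{n}\binom{i-2}{c-2}\frac{(1-p)^i\,\Gamma(i)}{\Gamma(i-p+1)}+\frac{p^{c-1}\,\Gamma(c)}{\Gamma(c-p+1)}\right),$$ where $\Gamma$ is the gamma function, an empty sum is $0$, and $\binom{i-2}{-1}=0$.
   Context: Simon urn. The urn is empty at time $0$. Let $B_0=1$ and let $(B_n)_{n\ge1}$ be i.i.d. Bernoulli random variables with $\Pr(B_n=1)=p\in(0,1)$, independent of everything else. Colors are labelled $1,2,\dots$ in order of first appearance. At each time $n\ge1$: if $B_{n-1}=1$, one ball of a new color (not yet present) is added to the urn and this color is registered; if $B_{n-1}=0$, a ball is drawn uniformly at random from the urn, its color is registered, and one additional ball of that color is added. Thus the urn contains $n$ balls at time $n$. $K_{n,c}$ denotes the number of times color $c$ has been registered up to and including time $n$ (equal to the number of balls of color $c$ at time $n$), and $K_{n,c}=0$ if color $c$ has not yet appeared. *)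

theory Defs
  imports "HOL-Probability.Probability"
begin

text \<open>State of the Simon urn at time n: the list of the colours of the n balls,
  in order of insertion.  Colours are labelled 1,2,... in order of first appearance,
  so a new colour gets label (number of colours present) + 1.
  The step from time n to time n+1 uses the trigger B_n, where B_0 = 1 and
  B_n ~ Bernoulli(p) for n >= 1, independent of everything else.\<close>

fun simon_urn :: "real \<Rightarrow> nat \<Rightarrow> nat list pmf" where
  "simon_urn p 0 = return_pmf []"
| "simon_urn p (Suc n) =
     simon_urn p n \<bind> (\<lambda>bs.
       (if n = 0 then return_pmf True else bernoulli_pmf p) \<bind> (\<lambda>b.
         if b then return_pmf (bs @ [card (set bs) + 1])
         else map_pmf (\<lambda>i. bs @ [bs ! i]) (pmf_of_set {..<length bs})))"

definition K :: "nat list \<Rightarrow> nat \<Rightarrow> nat" where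
  "K bs c = length (filter (\<lambda>x. x = c) bs)"

end

theory Submission
  imports Defs
begin

lemma exp_bind:
  fixes h :: "'b \<Rightarrow> real"
  assumes "finite (set_pmf M)" "\<And>x. x \<in> set_pmf M \<Longrightarrow> finite (set_pmf (f x))"
  shows "measure_pmf.expectation (M \<bind> f) h =
         measure_pmf.expectation M (\<lambda>x. measure_pmf.expectation (f x) h)"
proof -
  have "measure_pmf.expectation (M \<bind> f) h = (\<Sum>a\<in>set_pmf M. pmf M a *\<^sub>R measure_pmf.expectation (f a) h)"
    using assms by (intro pmf_expectation_bind) auto
  also have "\<dots> = measure_pmf.expectation M (\<lambda>x. measure_pmf.expectation (f x) h)"
    using assms by (subst integral_measure_pmf_real[of "set_pmf M"]) (auto simp: mult.commute)
  finally show ?thesis .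
qed

lemma simon_inv:
  "bs \<in> set_pmf (simon_urn p n) \<Longrightarrow> length bs = n \<and> (\<exists>m. set bs = {1..m})"
proof (induction n arbitrary: bs)
  case 0
  then show ?case by (auto intro!: exI[of _ 0])
next
  case (Suc n)
  have "simon_urn p (Suc n) = simon_urn p n \<bind> (\<lambda>bs.
       (if n = 0 then return_pmf True else bernoulli_pmf p) \<bind> (\<lambda>b.
         if b then return_pmf (bs @ [card (set bs) + 1])
         else map_pmf (\<lambda>i. bs @ [bs ! i]) (pmf_of_set {..<length bs})))"
    by (rule simon_urn.simps(2))
  then have "bs \<in> (\<Union>bs0\<in>set_pmf (simon_urn p n). \<Union>b\<in>set_pmf (if n = 0 then return_pmf True else bernoulli_pmf p).
       set_pmf (if b then return_pmf (bs0 @ [card (set bs0) + 1])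
         else map_pmf (\<lambda>i. bs0 @ [bs0 ! i]) (pmf_of_set {..<length bs0})))"
    using Suc.prems by (simp only: set_bind_pmf)
  then obtain bs0 b where bs0: "bs0 \<in> set_pmf (simon_urn p n)"
    and b: "b \<in> set_pmf (if n = 0 then return_pmf True else bernoulli_pmf p)"
    and bs: "bs \<in> set_pmf (if b then return_pmf (bs0 @ [card (set bs0) + 1])
         else map_pmf (\<lambda>i. bs0 @ [bs0 ! i]) (pmf_of_set {..<length bs0}))"
    by blast
  from Suc.IH[OF bs0] obtain m where len0: "length bs0 = n" and m: "set bs0 = {1..m}" by blast
  have cm: "card (set bs0) = m" using m by simp
  show ?case
  proof (cases b)
    case True
    then have e: "bs = bs0 @ [m + 1]" using bs cm by simp
    have "set bs = insert (m + 1) {1..m}" using m e by simp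
    also have "\<dots> = {1..m + 1}" by auto
    finally show ?thesis using len0 e by auto
  next
    case False
    have "n \<noteq> 0"
    proof
      assume "n = 0"
      then have "b = True" using b by simp
      then show False using False by simp
    qed
    then have len: "length bs0 \<noteq> 0" using len0 by simp
    have "0 \<in> {..<length bs0}" using len by simp
    then have S: "set_pmf (pmf_of_set {..<length bs0}) = {..<length bs0}"
      by (intro set_pmf_of_set) auto
    have "bs \<in> (\<lambda>i. bs0 @ [bs0 ! i]) ` set_pmf (pmf_of_set {..<length bs0})"
      using bs False by simp
    then have "bs \<in> (\<lambda>i. bs0 @ [bs0 ! i]) ` {..<length bs0}" unfolding S .
    then obtain i where i: "i < length bs0" and e: "bs = bs0 @ [bs0 ! i]"
      by blast
    have "set bs = set bs0" using e i by auto
    then show ?thesis using len0 m e by auto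
  qed
qed

lemma simon_inv2:
  assumes "bs \<in> set_pmf (simon_urn p n)"
  shows "length bs = n" "set bs = {1..card (set bs)}"
proof -
  from simon_inv[OF assms] obtain m where "length bs = n" "set bs = {1..m}" by blast
  then show "length bs = n" "set bs = {1..card (set bs)}" by simp_all
qed

lemma simon_fin: "finite (set_pmf (simon_urn p n))"
proof (rule finite_subset)
  show "set_pmf (simon_urn p n) \<subseteq> {xs. set xs \<subseteq> {..n} \<and> length xs = n}"
  proof
    fix bs assume a: "bs \<in> set_pmf (simon_urn p n)"
    from simon_inv[OF a] obtain m where l: "length bs = n" and m: "set bs = {1..m}" by blast
    have "card (set bs) \<le> n" using l card_length by metis
    then have "m \<le> n" using m by simp
    then show "bs \<in> {xs. set xs \<subseteq> {..n} \<and> length xs = n}" using l m by auto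
  qed
  show "finite {xs. set xs \<subseteq> {..n} \<and> length xs = n}"
    by (rule finite_lists_length_eq) simp
qed

lemma simon_step:
  fixes F :: "nat list \<Rightarrow> real"
  assumes "0 \<le> p" "p \<le> 1" "n \<ge> 1"
  shows "measure_pmf.expectation (simon_urn p (Suc n)) F =
    measure_pmf.expectation (simon_urn p n) (\<lambda>bs. p * F (bs @ [card (set bs) + 1]) +
      (1 - p) * ((\<Sum>i<n. F (bs @ [bs ! i])) / real n))"
proof -
  define g where "g bs = (\<lambda>b. if b then return_pmf (bs @ [card (set bs) + 1])
     else map_pmf (\<lambda>i. bs @ [bs ! i]) (pmf_of_set {..<length bs}))" for bs :: "nat list"
  have eq: "simon_urn p (Suc n) = simon_urn p n \<bind> (\<lambda>bs. bernoulli_pmf p \<bind> g bs)"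
    using assms by (simp add: g_def)
  have fin: "finite (set_pmf (g bs b))" if bs: "bs \<in> set_pmf (simon_urn p n)" for bs b
  proof -
    have len: "length bs = n" using simon_inv2(1)[OF bs] .
    have "0 \<in> {..<length bs}" using len assms by simp
    then have "set_pmf (pmf_of_set {..<length bs}) = {..<length bs}"
      by (intro set_pmf_of_set) auto
    then show ?thesis by (cases b) (auto simp: g_def)
  qed
  have inner: "measure_pmf.expectation (bernoulli_pmf p \<bind> g bs) F =
     p * F (bs @ [card (set bs) + 1]) + (1 - p) * ((\<Sum>i<n. F (bs @ [bs ! i])) / real n)"
    if bs: "bs \<in> set_pmf (simon_urn p n)" for bs
  proof -
    have len: "length bs = n" using simon_inv2(1)[OF bs] .
    have "0 \<in> {..<length bs}" using len assms by simp
    then have ne: "{..<length bs} \<noteq> {}" by blast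
    have "measure_pmf.expectation (bernoulli_pmf p \<bind> g bs) F =
        measure_pmf.expectation (bernoulli_pmf p) (\<lambda>b. measure_pmf.expectation (g bs b) F)"
    proof (rule exp_bind)
      show "finite (set_pmf (bernoulli_pmf p))"
        by (rule finite_subset[OF subset_UNIV]) simp
    qed (rule fin[OF bs])
    also have "\<dots> = (\<Sum>b\<in>UNIV. measure_pmf.expectation (g bs b) F * pmf (bernoulli_pmf p) b)"
      by (rule integral_measure_pmf_real) auto
    also have "\<dots> = p * F (bs @ [card (set bs) + 1]) + (1 - p) * ((\<Sum>i<n. F (bs @ [bs ! i])) / real n)"
    proof -
      have t: "measure_pmf.expectation (g bs True) F = F (bs @ [card (set bs) + 1])"
        by (simp add: g_def)
      have f: "measure_pmf.expectation (g bs False) F = (\<Sum>i<n. F (bs @ [bs ! i])) / real n"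
      proof -
        have "g bs False = map_pmf (\<lambda>i. bs @ [bs ! i]) (pmf_of_set {..<length bs})"
          by (simp add: g_def)
        then have "measure_pmf.expectation (g bs False) F =
            measure_pmf.expectation (pmf_of_set {..<length bs}) (\<lambda>i. F (bs @ [bs ! i]))"
          by simp
        also have "\<dots> = (\<Sum>i<length bs. F (bs @ [bs ! i])) / real (card {..<length bs})"
          by (rule integral_pmf_of_set[OF ne finite_lessThan])
        finally show ?thesis using len by simp
      qed
      show ?thesis using t f assms by (simp add: UNIV_bool mult.commute)
    qed
    finally show ?thesis .
  qed
  have fin2: "finite (set_pmf (bernoulli_pmf p \<bind> g bs))" if "bs \<in> set_pmf (simon_urn p n)" for bs
  proof -
    have bfin: "finite (set_pmf (bernoulli_pmf p))" by (rule finite_subset[OF subset_UNIV]) simp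
    show ?thesis unfolding set_bind_pmf by (intro finite_UN_I bfin fin[OF that])
  qed
  have "measure_pmf.expectation (simon_urn p n \<bind> (\<lambda>bs. bernoulli_pmf p \<bind> g bs)) F =
     measure_pmf.expectation (simon_urn p n) (\<lambda>bs. measure_pmf.expectation (bernoulli_pmf p \<bind> g bs) F)"
    by (rule exp_bind[OF simon_fin fin2])
  also have "\<dots> = measure_pmf.expectation (simon_urn p n) (\<lambda>bs. p * F (bs @ [card (set bs) + 1]) +
      (1 - p) * ((\<Sum>i<n. F (bs @ [bs ! i])) / real n))"
    by (rule integral_cong_AE) (simp_all add: AE_measure_pmf_iff inner)
  finally show ?thesis unfolding eq .
qed

lemma K_snoc: "K (bs @ [x]) c = K bs c + (if x = c then 1 else 0)"
  by (simp add: K_def)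

lemma sum_K: "(\<Sum>i<length bs. real (K (bs @ [bs ! i]) c)) = real (length bs) * K bs c + K bs c"
proof -
  have "(\<Sum>i<length bs. real (K (bs @ [bs ! i]) c)) =
      (\<Sum>i<length bs. real (K bs c) + (if bs ! i = c then 1 else 0))"
    by (intro sum.cong) (auto simp: K_snoc)
  also have "\<dots> = real (length bs) * K bs c + card {i. i < length bs \<and> bs ! i = c}"
  proof -
    have e: "{i. i < length bs \<and> bs ! i = c} = {..<length bs} \<inter> {i. bs ! i = c}" by auto
    have "(\<Sum>i<length bs. (if bs ! i = c then 1 else 0::real)) = real (card {i. i < length bs \<and> bs ! i = c})"
      unfolding e by (simp add: sum.If_cases)
    then show ?thesis by (simp add: sum.distrib)
  qed
  also have "card {i. i < length bs \<and> bs ! i = c} = K bs c"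
    by (simp add: K_def length_filter_conv_card)
  finally show ?thesis .
qed

lemma simon1: "simon_urn p (Suc 0) = return_pmf [1]"
  by (simp add: bind_return_pmf)


definition AA :: "real \<Rightarrow> nat \<Rightarrow> nat \<Rightarrow> real" where
  "AA p n c = measure_pmf.expectation (simon_urn p n) (\<lambda>bs. real (K bs c))"

definition QQ :: "real \<Rightarrow> nat \<Rightarrow> nat \<Rightarrow> real" where
  "QQ p n k = measure_pmf.expectation (simon_urn p n) (\<lambda>bs. if card (set bs) = k then 1 else 0)"

lemma int_fin: "integrable (measure_pmf (simon_urn p n)) (f :: nat list \<Rightarrow> real)"
  by (rule integrable_measure_pmf_finite[OF simon_fin])

lemma card_snoc_new:
  assumes "bs \<in> set_pmf (simon_urn p n)"
  shows "card (set (bs @ [card (set bs) + 1])) = card (set bs) + 1"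
proof -
  from simon_inv[OF assms] obtain m where m: "set bs = {1..m}" by blast
  have "set (bs @ [card (set bs) + 1]) = insert (m + 1) {1..m}" using m by simp
  also have "\<dots> = {1..m+1}" by auto
  finally show ?thesis using m by simp
qed

lemma AA_step:
  assumes "0 \<le> p" "p \<le> 1" "n \<ge> 1" "c \<ge> 1"
  shows "AA p (Suc n) c = (1 + (1 - p) / real n) * AA p n c + p * QQ p n (c - 1)"
proof -
  have "AA p (Suc n) c = measure_pmf.expectation (simon_urn p n)
     (\<lambda>bs. (1 + (1 - p) / real n) * real (K bs c) + p * (if card (set bs) = c - 1 then 1 else 0))"
    unfolding AA_def
  proof (subst simon_step[OF assms(1-3)], rule integral_cong_AE)
    show "AE bs in measure_pmf (simon_urn p n).
        p * real (K (bs @ [card (set bs) + 1]) c) + (1 - p) * ((\<Sum>i<n. real (K (bs @ [bs ! i]) c)) / real n) =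
        (1 + (1 - p) / real n) * real (K bs c) + p * (if card (set bs) = c - 1 then 1 else 0)"
      unfolding AE_measure_pmf_iff
    proof (intro ballI)
      fix bs assume bs: "bs \<in> set_pmf (simon_urn p n)"
      have len: "length bs = n" by (rule simon_inv2(1)[OF bs])
      have s: "(\<Sum>i<n. real (K (bs @ [bs ! i]) c)) = real n * K bs c + K bs c"
        using sum_K[of bs c] len by simp
      have k: "real (K (bs @ [card (set bs) + 1]) c) = K bs c + (if card (set bs) = c - 1 then 1 else 0)"
        using assms(4) by (auto simp: K_snoc)
      have n0: "real n > 0" using assms by simp
      show "p * real (K (bs @ [card (set bs) + 1]) c) + (1 - p) * ((\<Sum>i<n. real (K (bs @ [bs ! i]) c)) / real n) =
        (1 + (1 - p) / real n) * real (K bs c) + p * (if card (set bs) = c - 1 then 1 else 0)"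
        unfolding s k using n0 by (simp add: field_simps)
    qed
  qed simp_all
  also have "\<dots> = (1 + (1 - p) / real n) * AA p n c + p * QQ p n (c - 1)"
    unfolding AA_def QQ_def by (simp add: int_fin)
  finally show ?thesis .
qed

lemma QQ_step:
  assumes "0 \<le> p" "p \<le> 1" "n \<ge> 1"
  shows "QQ p (Suc n) (Suc j) = p * QQ p n j + (1 - p) * QQ p n (Suc j)"
proof -
  have "QQ p (Suc n) (Suc j) = measure_pmf.expectation (simon_urn p n)
     (\<lambda>bs. p * (if card (set bs) = j then 1 else 0) + (1 - p) * (if card (set bs) = Suc j then 1 else 0))"
    unfolding QQ_def
  proof (subst simon_step[OF assms(1-3)], rule integral_cong_AE)
    show "AE bs in measure_pmf (simon_urn p n).
        p * (if card (set (bs @ [card (set bs) + 1])) = Suc j then 1 else 0) +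
        (1 - p) * ((\<Sum>i<n. (if card (set (bs @ [bs ! i])) = Suc j then 1 else 0)) / real n) =
        p * (if card (set bs) = j then 1 else 0) + (1 - p) * (if card (set bs) = Suc j then 1 else 0)"
      unfolding AE_measure_pmf_iff
    proof (intro ballI)
      fix bs assume bs: "bs \<in> set_pmf (simon_urn p n)"
      have len: "length bs = n" by (rule simon_inv2(1)[OF bs])
      have "(\<Sum>i<n. (if card (set (bs @ [bs ! i])) = Suc j then 1 else 0::real)) =
            (\<Sum>i<n. (if card (set bs) = Suc j then 1 else 0))"
      proof (rule sum.cong)
        fix i assume "i \<in> {..<n}"
        then have "bs ! i \<in> set bs" using len by simp
        then have "set (bs @ [bs ! i]) = set bs" by auto
        then show "(if card (set (bs @ [bs ! i])) = Suc j then 1 else 0::real) =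
            (if card (set bs) = Suc j then 1 else 0)" by simp
      qed simp
      also have "\<dots> = real n * (if card (set bs) = Suc j then 1 else 0)" by simp
      finally have s: "(\<Sum>i<n. (if card (set (bs @ [bs ! i])) = Suc j then 1 else 0::real)) =
            real n * (if card (set bs) = Suc j then 1 else 0)" .
      have n0: "real n > 0" using assms by simp
      show "p * (if card (set (bs @ [card (set bs) + 1])) = Suc j then 1 else 0) +
        (1 - p) * ((\<Sum>i<n. (if card (set (bs @ [bs ! i])) = Suc j then 1 else 0)) / real n) =
        p * (if card (set bs) = j then 1 else 0) + (1 - p) * (if card (set bs) = Suc j then 1 else 0)"
        unfolding s card_snoc_new[OF bs] using n0 by simp
    qed
  qed simp_all
  also have "\<dots> = p * QQ p n j + (1 - p) * QQ p n (Suc j)"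
    unfolding QQ_def by (simp add: int_fin)
  finally show ?thesis .
qed

lemma QQ_zero: "QQ p (Suc m) 0 = 0"
proof -
  have "QQ p (Suc m) 0 = measure_pmf.expectation (simon_urn p (Suc m)) (\<lambda>bs. 0::real)"
    unfolding QQ_def
  proof (rule integral_cong_AE)
    show "AE bs in measure_pmf (simon_urn p (Suc m)). (if card (set bs) = 0 then 1 else 0::real) = 0"
      unfolding AE_measure_pmf_iff
    proof
      fix bs assume bs: "bs \<in> set_pmf (simon_urn p (Suc m))"
      have "length bs = Suc m" by (rule simon_inv2(1)[OF bs])
      then have "bs \<noteq> []" by auto
      then show "(if card (set bs) = 0 then 1 else 0::real) = 0" by simp
    qed
  qed simp_all
  then show ?thesis by simp
qed

lemma QQ_one: "QQ p (Suc 0) k = (if k = 1 then 1 else 0)"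
  unfolding QQ_def simon1 by simp

lemma QQ_closed:
  assumes "0 \<le> p" "p \<le> 1"
  shows "QQ p (Suc m) (Suc j) = real (m choose j) * p ^ j * (1 - p) ^ (m - j)"
proof (induction m arbitrary: j)
  case 0
  then show ?case by (simp add: QQ_one)
next
  case (Suc m)
  have st: "QQ p (Suc (Suc m)) (Suc j) = p * QQ p (Suc m) j + (1 - p) * QQ p (Suc m) (Suc j)"
    by (rule QQ_step[OF assms]) simp
  show ?case
  proof (cases j)
    case 0
    then show ?thesis using st Suc.IH[of 0] by (simp add: QQ_zero)
  next
    case (Suc d)
    have key: "(1 - p) * (real (m choose Suc d) * (1 - p) ^ (m - Suc d)) =
               real (m choose Suc d) * (1 - p) ^ (m - d)"
    proof (cases "d < m")
      case True
      then have "m - d = Suc (m - Suc d)" by simp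
      then show ?thesis by simp
    next
      case False
      then show ?thesis by simp
    qed
    have "QQ p (Suc (Suc m)) (Suc j) =
        p * (real (m choose d) * p ^ d * (1 - p) ^ (m - d)) +
        (1 - p) * (real (m choose Suc d) * p ^ Suc d * (1 - p) ^ (m - Suc d))"
      using st Suc.IH[of d] Suc.IH[of "Suc d"] \<open>j = Suc d\<close> by simp
    also have "\<dots> = p ^ Suc d * (real (m choose d) * (1 - p) ^ (m - d)) +
        p ^ Suc d * ((1 - p) * (real (m choose Suc d) * (1 - p) ^ (m - Suc d)))"
      by (simp add: algebra_simps)
    also have "\<dots> = p ^ Suc d * (real (m choose d) * (1 - p) ^ (m - d)) +
        p ^ Suc d * (real (m choose Suc d) * (1 - p) ^ (m - d))"
      unfolding key ..
    also have "\<dots> = real (Suc m choose j) * p ^ j * (1 - p) ^ (Suc m - j)"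
      using \<open>j = Suc d\<close> by (simp add: algebra_simps)
    finally show ?thesis .
  qed
qed

lemma AA_zero:
  assumes "n < c"
  shows "AA p n c = 0"
proof -
  have "AA p n c = measure_pmf.expectation (simon_urn p n) (\<lambda>bs. 0::real)"
    unfolding AA_def
  proof (rule integral_cong_AE)
    show "AE bs in measure_pmf (simon_urn p n). real (K bs c) = 0"
      unfolding AE_measure_pmf_iff
    proof
      fix bs assume bs: "bs \<in> set_pmf (simon_urn p n)"
      from simon_inv[OF bs] obtain m where l: "length bs = n" and m: "set bs = {1..m}" by blast
      have "card (set bs) \<le> n" using l card_length by metis
      then have "m \<le> n" using m by simp
      then have "c \<notin> set bs" using m assms by auto
      then have "filter (\<lambda>x. x = c) bs = []" by (auto simp: filter_empty_conv)
      then show "real (K bs c) = 0" by (simp add: K_def)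
    qed
  qed simp_all
  then show ?thesis by simp
qed

lemma AA_one: "AA p (Suc 0) (Suc 0) = 1"
  unfolding AA_def simon1 by (simp add: K_def)


lemma Gamma_Suc_real:
  fixes x :: real assumes "x > 0" shows "Gamma (x + 1) = x * Gamma x"
proof (rule Gamma_plus1)
  show "x \<notin> \<int>\<^sub>\<le>\<^sub>0" using assms nonpos_Ints_nonpos by fastforce
qed

lemma AA_diag:
  assumes "0 < p" "p < 1" "c \<ge> 1"
  shows "AA p c c = p ^ (c - 1)"
proof (cases "c = 1")
  case True
  then show ?thesis using AA_one by simp
next
  case False
  have "c = Suc (Suc (c - 2))" using False assms(3) by simp
  then obtain d where d: "c = Suc (Suc d)" by blast
  have "AA p c c = (1 + (1 - p) / real (Suc d)) * AA p (Suc d) c + p * QQ p (Suc d) (c - 1)"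
    unfolding d by (rule AA_step) (use assms in auto)
  also have "AA p (Suc d) c = 0" by (rule AA_zero) (simp add: d)
  also have "QQ p (Suc d) (c - 1) = p ^ d"
    using QQ_closed[of p d d] assms by (simp add: d)
  finally show ?thesis by (simp add: d)
qed

lemma hlp: "(x::real) * (a * b * g / h) = a * b * (x * g / h)"
  by (simp add: divide_inverse mult_ac)

theorem lemma4p2:
  fixes p :: real and n c :: nat
  assumes "0 < p" "p < 1" "1 \<le> c" "c \<le> n"
  shows "measure_pmf.expectation (simon_urn p n) (\<lambda>bs. real (K bs c)) =
    Gamma (real n - p + 1) / Gamma (real n) *
      (p ^ (c - 1) / (1 - p) ^ c *
         (\<Sum>i = c + 1..n. (if c < 2 then 0 else real ((i - 2) choose (c - 2))) *
             (1 - p) ^ i * Gamma (real i) / Gamma (real i - p + 1))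
       + p ^ (c - 1) * Gamma (real c) / Gamma (real c - p + 1))"
proof -
  define G where "G m = Gamma (real m - p + 1) / Gamma (real m)" for m :: nat
  define T where "T i = (if c < 2 then 0 else real ((i - 2) choose (c - 2))) *
             (1 - p) ^ i * Gamma (real i) / Gamma (real i - p + 1)" for i :: nat
  define B where "B = p ^ (c - 1) * Gamma (real c) / Gamma (real c - p + 1)"
  define Cc where "Cc = p ^ (c - 1) / (1 - p) ^ c"
  have gpos: "Gamma (real m) > 0" "Gamma (real m - p + 1) > 0" if "m \<ge> 1" for m
    using that assms by auto
  have GT1: "G m * Gamma (real m) / Gamma (real m - p + 1) = 1" if "m \<ge> 1" for m
    using gpos[OF that] unfolding G_def by (simp add: field_simps)
  have GSuc: "G (Suc m) = (1 + (1 - p) / real m) * G m" if "m \<ge> 1" for m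
  proof -
    have m0: "real m > 0" using that by simp
    have e1: "Gamma (real (Suc m)) = real m * Gamma (real m)"
      using Gamma_Suc_real[OF m0] by (simp add: add.commute)
    have e2: "Gamma (real (Suc m) - p + 1) = (real m - p + 1) * Gamma (real m - p + 1)"
      using Gamma_Suc_real[of "real m - p + 1"] assms m0 by (simp add: algebra_simps)
    show ?thesis unfolding G_def e1 e2 using m0 gpos[OF that]
      by (simp add: field_simps)
  qed
  have QT: "p * QQ p m (c - 1) = Cc * ((if c < 2 then 0 else real ((Suc m - 2) choose (c - 2))) * (1 - p) ^ Suc m)"
    if mc: "m \<ge> c" for m
  proof (cases "c < 2")
    case True
    then have "c = 1" using assms by simp
    moreover obtain m' where "m = Suc m'" using mc assms by (cases m) auto
    ultimately show ?thesis using True by (simp add: QQ_zero)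
  next
    case False
    have "c = Suc (Suc (c - 2))" using False by simp
    then obtain d where d: "c = Suc (Suc d)" by blast
    obtain m' where m': "m = Suc m'" using mc assms by (cases m) auto
    have dm: "d \<le> m'" using mc d m' by simp
    have pw: "(1 - p) ^ Suc m = (1 - p) ^ Suc (Suc d) * (1 - p) ^ (m' - d)"
      using dm unfolding m' by (simp flip: power_add)
    have ne: "(1 - p) ^ Suc (Suc d) \<noteq> 0" using assms by simp
    have "p * QQ p m (c - 1) = p * (real (m' choose d) * p ^ d * (1 - p) ^ (m' - d))"
      using QQ_closed[of p m' d] assms by (simp add: d m')
    also have "\<dots> = Cc * (real (m' choose d) * (1 - p) ^ Suc m)"
      unfolding Cc_def pw d using ne by (simp add: field_simps)
    finally show ?thesis using d m' by simp
  qed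
  have main: "AA p m c = G m * (Cc * (\<Sum>i = c + 1..m. T i) + B)" if "c \<le> m" for m
    using that
  proof (induction m rule: dec_induct)
    case base
    have "G c * B = p ^ (c - 1) * (G c * Gamma (real c) / Gamma (real c - p + 1))"
      unfolding B_def by simp
    then have "G c * B = p ^ (c - 1)" using GT1[OF assms(3)] by simp
    then show ?case using AA_diag[OF assms(1-3)] by simp
  next
    case (step m)
    have m1: "m \<ge> 1" using step.hyps assms by simp
    have "AA p (Suc m) c = (1 + (1 - p) / real m) * AA p m c + p * QQ p m (c - 1)"
      by (rule AA_step) (use assms m1 in auto)
    also have "\<dots> = (1 + (1 - p) / real m) * (G m * (Cc * (\<Sum>i = c + 1..m. T i) + B)) +
         Cc * ((if c < 2 then 0 else real ((Suc m - 2) choose (c - 2))) * (1 - p) ^ Suc m)"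
      using step.IH QT[OF step.hyps(1)] by simp
    also have "(if c < 2 then 0 else real ((Suc m - 2) choose (c - 2))) * (1 - p) ^ Suc m = G (Suc m) * T (Suc m)"
    proof -
      have "G (Suc m) * T (Suc m) = (if c < 2 then 0 else real ((Suc m - 2) choose (c - 2))) * (1 - p) ^ Suc m *
          (G (Suc m) * Gamma (real (Suc m)) / Gamma (real (Suc m) - p + 1))"
        unfolding T_def by (rule hlp)
      also have "\<dots> = (if c < 2 then 0 else real ((Suc m - 2) choose (c - 2))) * (1 - p) ^ Suc m"
      proof -
        have g: "G (Suc m) * Gamma (real (Suc m)) / Gamma (real (Suc m) - p + 1) = 1"
          by (rule GT1) simp
        show ?thesis unfolding g by simp
      qed
      finally show ?thesis by simp
    qed
    also have "(1 + (1 - p) / real m) * (G m * (Cc * (\<Sum>i = c + 1..m. T i) + B)) + Cc * (G (Suc m) * T (Suc m)) =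
        G (Suc m) * (Cc * (\<Sum>i = c + 1..Suc m. T i) + B)"
      using step.hyps(1) unfolding GSuc[OF m1] by (simp add: algebra_simps)
    finally show ?case .
  qed
  show ?thesis using main[OF assms(4)] unfolding AA_def G_def T_def B_def Cc_def
    by (simp add: sum_divide_distrib)
qed

end
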